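(* Let $g:[0,\infty)\to[0,\infty)$ be a strictly increasing $C^1$ function with $g(0)=0$. Assume there is $a_*>0$ such that $c_0:=\min_{[0,a_*]}g'>0$ and $g$ restricted to $[a_*,\infty)$ is convex. Let $c_1=\max_{[0,a_*]}g'$ and $\gamma=c_1/c_0$. Then $$g(x)+g(y)\le g(x+\gamma y)\quad\text{for all }x,y\in[0,\infty).$$ *)

theory Defs
  imports "HOL-Analysis.Analysis"
begin

end

theory Submission
  imports Defs
begin

theorem lemma5p3:
  fixes g g' :: "real \<Rightarrow> real" and a :: real
  assumes deriv: "\<And>x. x \<ge> 0 \<Longrightarrow> (g has_real_derivative g' x) (at x within {0..})"
    and cont: "continuous_on {0..} g'"
    and nonneg: "\<And>x. x \<ge> 0 \<Longrightarrow> g x \<ge> 0"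
    and incr: "strict_mono_on {0..} g"
    and g0: "g 0 = 0"
    and apos: "a > 0"
    and c0pos: "(INF t\<in>{0..a}. g' t) > 0"
    and conv: "convex_on {a..} g"
    and x: "x \<ge> 0" and y: "y \<ge> 0"
  shows "g x + g y \<le> g (x + ((SUP t\<in>{0..a}. g' t) / (INF t\<in>{0..a}. g' t)) * y)"
proof -
  define c0 where "c0 = (INF t\<in>{0..a}. g' t)"
  define c1 where "c1 = (SUP t\<in>{0..a}. g' t)"
  define \<gamma> where "\<gamma> = c1 / c0"
  have c0p: "c0 > 0" using c0pos c0_def by simp
  have comp: "compact (g' ` {0..a})"
    by (rule compact_continuous_image) (auto intro: continuous_on_subset[OF cont])
  have bb: "bdd_below (g' ` {0..a})" "bdd_above (g' ` {0..a})"
    using comp by (auto intro: bounded_imp_bdd_below bounded_imp_bdd_above compact_imp_bounded)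
  have lo: "c0 \<le> g' t" if "t \<in> {0..a}" for t
    unfolding c0_def using bb(1) that by (intro cInf_lower) auto
  have hi: "g' t \<le> c1" if "t \<in> {0..a}" for t
    unfolding c1_def using bb(2) that by (intro cSup_upper) auto
  have c01: "c0 \<le> c1" using lo[of 0] hi[of 0] apos by auto
  have gam1: "\<gamma> \<ge> 1" using c01 c0p by (simp add: \<gamma>_def)
  have gat: "(g has_real_derivative g' t) (at t)" if "t > 0" for t
  proof -
    have "(g has_real_derivative g' t) (at t within {0<..})"
      using has_field_derivative_subset[OF deriv[of t], of "{0<..}"] that
      by (auto simp: subset_eq less_imp_le)
    then show ?thesis using at_within_open[of t "{0<..}"] that by simp
  qed
  have tang: "g s - g t \<ge> g' t * (s - t)" if "t > a" "s \<ge> a" for s t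
  proof (rule convex_on_imp_above_tangent[OF conv])
    show "connected {a..}" by simp
    show "t \<in> interior {a..}" using that by simp
    show "s \<in> {a..}" using that by simp
    show "(g has_real_derivative g' t) (at t within {a..})"
      using gat[of t] that apos by (auto intro: has_field_derivative_at_within)
  qed
  have monoi: "g' s \<le> g' t" if "a < s" "s < t" for s t
  proof -
    have "g t - g s \<ge> g' s * (t - s)" using tang[of s t] that by auto
    moreover have "g s - g t \<ge> g' t * (s - t)" using tang[of t s] that by auto
    ultimately have "g' s * (t - s) \<le> g' t * (t - s)" by (simp add: algebra_simps)
    then show ?thesis using that by simp
  qed
  have mono_a: "g' a \<le> g' t" if "a < t" for t
  proof -
    have "(g' \<longlongrightarrow> g' a) (at a within {0..})"
      using cont apos by (simp add: continuous_on_def)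
    then have lim: "(g' \<longlongrightarrow> g' a) (at_right a)"
      by (rule tendsto_within_subset) (use apos in auto)
    have ev: "eventually (\<lambda>s. g' s \<le> g' t) (at_right a)"
      unfolding eventually_at_right_field using that monoi by blast
    show ?thesis by (rule tendsto_upperbound[OF lim ev]) simp
  qed
  have allc0: "c0 \<le> g' t" if "t \<ge> 0" for t
  proof (cases "t \<le> a")
    case True then show ?thesis using lo that by auto
  next
    case False
    then have "g' a \<le> g' t" using mono_a by auto
    moreover have "c0 \<le> g' a" using lo apos by auto
    ultimately show ?thesis by linarith
  qed
  define h where "h s = g (x + \<gamma> * s) - g x - g s" for s
  have hder: "(h has_real_derivative (\<gamma> * g' (x + \<gamma> * s) - g' s)) (at s)" if "s > 0" for s
  proof -
    have p: "x + \<gamma> * s > 0" using x that gam1 by (smt (verit) mult_pos_pos)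
    have "((\<lambda>s. g (x + \<gamma> * s)) has_real_derivative g' (x + \<gamma> * s) * \<gamma>) (at s)"
      by (rule DERIV_chain2[where g="\<lambda>s. x + \<gamma> * s", OF gat[OF p]]) (auto intro!: derivative_eq_intros)
    then show ?thesis unfolding h_def[abs_def]
      using gat[OF that] by (auto intro!: derivative_eq_intros simp: mult.commute)
  qed
  show ?thesis
  proof (cases "y = 0")
    case True then show ?thesis using g0 by simp
  next
    case False
    then have yp: "y > 0" using y by simp
    have gc: "continuous_on {0..} g"
      using deriv by (auto simp: continuous_on_eq_continuous_within intro: DERIV_continuous)
    have hc: "continuous_on {0..y} h"
      unfolding h_def[abs_def]
      using x gam1 by (intro continuous_intros continuous_on_compose2[OF gc] continuous_on_subset[OF gc]) auto
    obtain l z where z: "0 < z" "z < y" "DERIV h z :> l" "h y - h 0 = (y - 0) * l"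
      using MVT[OF yp hc] hder by (meson real_differentiable_def)
    have l: "l = \<gamma> * g' (x + \<gamma> * z) - g' z"
      using DERIV_unique[OF z(3) hder[OF z(1)]] .
    have "g' z \<le> \<gamma> * g' (x + \<gamma> * z)"
    proof (cases "z \<le> a")
      case True
      have "g' z \<le> c1" using hi True z by auto
      also have "c1 = \<gamma> * c0" using c0p by (simp add: \<gamma>_def)
      also have "\<gamma> * c0 \<le> \<gamma> * g' (x + \<gamma> * z)"
        using allc0[of "x + \<gamma> * z"] x z gam1 by (intro mult_left_mono) auto
      finally show ?thesis .
    next
      case False
      have "g' z \<le> g' (x + \<gamma> * z)"
      proof (cases "z < x + \<gamma> * z")
        case True then show ?thesis using monoi False by auto
      next
        case F: False
        then have "x + \<gamma> * z = z" using x z gam1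
          by (smt (verit) mult_le_cancel_right1)
        then show ?thesis by simp
      qed
      also have "\<dots> \<le> \<gamma> * g' (x + \<gamma> * z)"
        using allc0[of "x + \<gamma> * z"] c0p x z gam1
        by (smt (verit) mult_le_cancel_right1 mult.commute)
      finally show ?thesis .
    qed
    then have "l \<ge> 0" using l by simp
    then have "y * l \<ge> 0" using yp by simp
    then have "h y \<ge> h 0" using z(4) by simp
    then show ?thesis using g0 by (simp add: h_def \<gamma>_def c0_def c1_def)
  qed
qed

end
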